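(* For $n\ge1$, $\left|\Pi_n\wr C_2(1^11^2,1^21^1)\right|=\sum_{k=0}^n 2^k \begin{Bmatrix} n\\ k\end{Bmatrix}$, where $\begin{Bmatrix} n\\ k\end{Bmatrix}$ is a Stirling number of the second kind.
   Context: For $n\ge0$ let $[n]=\{1,\dots,n\}$. A $2$-colored set partition of $[n]$ is a set partition of $[n]$ together with an assignment of a color from $\{1,2\}$ to each element; $\Pi_n\wr C_2$ is the set of these. For a set $S$ of patterns, $\Pi_n\wr C_2(S)$ is the set of such colored partitions avoiding every pattern in $S$ in the pattern sense. For the patterns used here: $\sigma$ contains $1^11^2$ iff there are $i<j$ in the same block with $i$ colored $1$ and $j$ colored $2$; $\sigma$ contains $1^21^1$ iff there are $i<j$ in the same block with $i$ colored $2$ and $j$ colored $1$. *)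

theory Defs
  imports Main "HOL-Library.Disjoint_Sets" "HOL-Library.FuncSet" "HOL-Combinatorics.Stirling"
begin

definition colored_partitions :: "nat \<Rightarrow> (nat set set \<times> (nat \<Rightarrow> nat)) set" where
  "colored_partitions n =
     {(P, c). partition_on {1..n} P \<and> c \<in> {1..n} \<rightarrow>\<^sub>E {1::nat, 2}}"

text \<open>Containment of the pattern 1^1 1^2: i<j in the same block, i colored 1, j colored 2.\<close>
definition contains_11_12 :: "nat set set \<times> (nat \<Rightarrow> nat) \<Rightarrow> bool" where
  "contains_11_12 \<sigma> = (\<exists>B\<in>fst \<sigma>. \<exists>i\<in>B. \<exists>j\<in>B. i < j \<and> snd \<sigma> i = 1 \<and> snd \<sigma> j = 2)"

definition contains_12_11 :: "nat set set \<times> (nat \<Rightarrow> nat) \<Rightarrow> bool" where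
  "contains_12_11 \<sigma> = (\<exists>B\<in>fst \<sigma>. \<exists>i\<in>B. \<exists>j\<in>B. i < j \<and> snd \<sigma> i = 2 \<and> snd \<sigma> j = 1)"

end

theory Submission
  imports Defs
begin

lemma part_iff: "partition_on A P \<longleftrightarrow> \<Union>P = A \<and> {} \<notin> P \<and> (\<forall>X\<in>P. \<forall>Y\<in>P. X \<noteq> Y \<longrightarrow> X \<inter> Y = {})"
  by (auto simp: partition_on_def disjoint_def)

definition hh :: "'a \<Rightarrow> 'a set set \<times> 'a set \<Rightarrow> 'a set set" where
  "hh a = (\<lambda>(P,B). insert (insert a B) (P - {B}))"

lemma card_parts_empty: "card {P::'a set set. partition_on {} P \<and> card P = k} = Stirling 0 k"
proof -
  have E: "{P::'a set set. partition_on {} P \<and> card P = k} = (if k = 0 then {{}} else {})"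
    by (auto simp: partition_on_empty)
  then show ?thesis
  proof (cases k)
    case (Suc m)
    then have "{P::'a set set. partition_on {} P \<and> card P = k} = {}" using E by simp
    then show ?thesis using Suc by (simp only: card.empty Stirling.simps)
  qed simp
qed

lemma card_parts_zero:
  assumes "finite A" "A \<noteq> {}"
  shows "{P. partition_on A P \<and> card P = 0} = {}"
  using assms by (auto simp: part_iff dest: finite_UnionD)

lemma S1_eq:
  assumes "a \<notin> A" "finite A"
  shows "{Q. partition_on (insert a A) Q \<and> card Q = Suc k \<and> {a} \<in> Q}
       = insert {a} ` {P. partition_on A P \<and> card P = k}" (is "?L = ?R")
proof
  show "?L \<subseteq> ?R"
  proof
    fix Q assume Q: "Q \<in> ?L"
    hence fQ: "finite Q" by (metis (mono_tags, lifting) Suc_neq_Zero card.infinite mem_Collect_eq)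
    have Qp: "\<Union>Q = insert a A" "{} \<notin> Q" "\<And>X Y. X\<in>Q \<Longrightarrow> Y\<in>Q \<Longrightarrow> X \<noteq> Y \<Longrightarrow> X \<inter> Y = {}" "{a} \<in> Q"
      using Q unfolding part_iff by auto
    have na: "a \<notin> X" if "X \<in> Q - {{a}}" for X using Qp(3)[of X "{a}"] Qp(4) that by auto
    have "\<Union>(Q - {{a}}) = A"
    proof
      show "\<Union>(Q - {{a}}) \<subseteq> A"
      proof
        fix x assume "x \<in> \<Union>(Q - {{a}})"
        then obtain X where X: "X \<in> Q - {{a}}" "x \<in> X" by blast
        hence "x \<in> insert a A" using Qp(1) by blast
        moreover have "x \<noteq> a" using na[OF X(1)] X(2) by auto
        ultimately show "x \<in> A" by simp
      qed
      show "A \<subseteq> \<Union>(Q - {{a}})"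
      proof
        fix x assume "x \<in> A"
        then obtain X where "X \<in> Q" "x \<in> X" using Qp(1) by blast
        moreover have "X \<noteq> {a}" using \<open>x \<in> A\<close> assms \<open>x \<in> X\<close> by auto
        ultimately show "x \<in> \<Union>(Q - {{a}})" by blast
      qed
    qed
    hence pQ: "partition_on A (Q - {{a}})" using Qp unfolding part_iff by blast
    have "card (Q - {{a}}) = k" using Q fQ by (simp add: card_Diff_singleton)
    moreover have "Q = insert {a} (Q - {{a}})" using Qp(4) by blast
    ultimately show "Q \<in> ?R" using pQ by blast
  qed
next
  show "?R \<subseteq> ?L"
  proof
    fix Q assume "Q \<in> ?R"
    then obtain P where P: "partition_on A P" "card P = k" and Q: "Q = insert {a} P" by auto
    have "{a} \<notin> P" using P assms by (auto simp: part_iff)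
    moreover have "finite P" using finite_elements[OF assms(2) P(1)] .
    ultimately have "card Q = Suc k" using Q P by simp
    moreover have "partition_on (insert a A) Q" unfolding Q
      by (subst partition_on_insert) (use P(1) assms in \<open>auto simp: disjnt_def dest: partition_onD1\<close>)
    ultimately show "Q \<in> ?L" using Q by auto
  qed
qed


lemma disj_rest: "partition_on A P \<Longrightarrow> B \<in> P \<Longrightarrow> disjnt B (\<Union>(P - {B}))"
  unfolding part_iff disjnt_def by blast

lemma rest_part: "partition_on A P \<Longrightarrow> B \<in> P \<Longrightarrow> partition_on (A - B) (P - {B})"
proof -
  assume P: "partition_on A P" and B: "B \<in> P"
  have "insert B (P - {B}) = P" using B by blast
  hence "partition_on A (insert B (P - {B}))" using P by simp
  thus ?thesis using partition_on_insert[OF disj_rest[OF P B]] by blast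
qed

lemma blk_sub: "partition_on A P \<Longrightarrow> B \<in> P \<Longrightarrow> B \<subseteq> A"
  by (auto dest: partition_onD1)

lemma blk_ne: "partition_on A P \<Longrightarrow> B \<in> P \<Longrightarrow> B \<noteq> {}"
  by (auto dest: partition_onD3)

lemma hh_inj:
  assumes "a \<notin> A"
  shows "inj_on (hh a) (SIGMA P:{P. partition_on A P}. P)"
proof (rule inj_onI)
  fix x y assume x: "x \<in> (SIGMA P:{P. partition_on A P}. P)" and y: "y \<in> (SIGMA P:{P. partition_on A P}. P)"
    and e: "hh a x = hh a y"
  obtain P B where xPB: "x = (P, B)" and P: "partition_on A P" and B: "B \<in> P" using x by auto
  obtain P' B' where yPB: "y = (P', B')" and P': "partition_on A P'" and B': "B' \<in> P'" using y by auto
  have e2: "insert (insert a B) (P - {B}) = insert (insert a B') (P' - {B'})"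
    using e xPB yPB by (simp add: hh_def)
  have naP: "a \<notin> X" if "X \<in> P" for X using blk_sub[OF P that] assms by blast
  have naP': "a \<notin> X" if "X \<in> P'" for X using blk_sub[OF P' that] assms by blast
  have "insert a B \<in> insert (insert a B') (P' - {B'})" using e2 by blast
  moreover have "insert a B \<notin> P' - {B'}" using naP' by blast
  ultimately have "insert a B = insert a B'" by blast
  hence BB: "B = B'" using naP[OF B] naP'[OF B'] by (metis Diff_insert_absorb)
  have "P - {B} = insert (insert a B) (P - {B}) - {insert a B}" using naP by blast
  also have "\<dots> = insert (insert a B') (P' - {B'}) - {insert a B'}" using e2 BB by simp
  also have "\<dots> = P' - {B'}" using naP' by blast
  finally have "P - {B} = P' - {B'}" .
  hence "P = P'" using B B' BB by blast
  thus "x = y" using xPB yPB BB by simp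
qed


lemma S2_eq:
  assumes "a \<notin> A" "finite A"
  shows "{Q. partition_on (insert a A) Q \<and> card Q = Suc k \<and> {a} \<notin> Q}
       = hh a ` (SIGMA P:{P. partition_on A P \<and> card P = Suc k}. P)" (is "?L = ?R")
proof
  show "?R \<subseteq> ?L"
  proof
    fix Q assume "Q \<in> ?R"
    then obtain P B where P: "partition_on A P" "card P = Suc k" and B: "B \<in> P"
      and Q: "Q = insert (insert a B) (P - {B})" by (auto simp: hh_def)
    have naP: "a \<notin> X" if "X \<in> P" for X using blk_sub[OF P(1) that] assms by blast
    have fP: "finite P" using finite_elements[OF assms(2) P(1)] .
    have "insert a B \<notin> P - {B}" using naP by blast
    hence "card Q = Suc (card (P - {B}))" using Q fP by simp
    also have "\<dots> = Suc k" using P(2) B fP by (simp add: card_Diff_singleton)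
    finally have cQ: "card Q = Suc k" .
    have "disjnt (insert a B) (\<Union>(P - {B}))"
      using disj_rest[OF P(1) B] naP unfolding disjnt_def by blast
    note pi = partition_on_insert[OF this, of "insert a A"]
    have "insert a A - insert a B = A - B" using assms(1) by blast
    hence pQ: "partition_on (insert a A) Q" unfolding Q pi
      using rest_part[OF P(1) B] blk_sub[OF P(1) B] by (simp add: subset_insertI2)
    have "{a} \<noteq> insert a B" using blk_ne[OF P(1) B] naP[OF B] by blast
    moreover have "{a} \<notin> P" using naP by blast
    ultimately have "{a} \<notin> Q" using Q by blast
    thus "Q \<in> ?L" using pQ cQ by blast
  qed
next
  show "?L \<subseteq> ?R"
  proof
    fix Q assume "Q \<in> ?L"
    hence pQ: "partition_on (insert a A) Q" and cQ: "card Q = Suc k" and aQ: "{a} \<notin> Q" by auto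
    have fQ: "finite Q" using finite_elements[OF _ pQ] assms(2) by simp
    have "a \<in> \<Union>Q" using partition_onD1[OF pQ] by (metis insertI1)
    then obtain Xa where Xa: "Xa \<in> Q" "a \<in> Xa" by (rule UnionE)
    define B where "B = Xa - {a}"
    define P where "P = insert B (Q - {Xa})"
    have Bne: "B \<noteq> {}"
    proof
      assume "B = {}"
      hence "Xa = {a}" using Xa(2) unfolding B_def by auto
      thus False using aQ Xa(1) by simp
    qed
    have BA: "B \<subseteq> A" using blk_sub[OF pQ Xa(1)] unfolding B_def by blast
    have r: "partition_on (insert a A - Xa) (Q - {Xa})" using rest_part[OF pQ Xa(1)] .
    have "insert a A - Xa = A - B" using Xa assms(1) unfolding B_def by blast
    hence r': "partition_on (A - B) (Q - {Xa})" using r by simp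
    have d: "disjnt B (\<Union>(Q - {Xa}))" using disj_rest[OF pQ Xa(1)] unfolding B_def disjnt_def by blast
    have pP: "partition_on A P" unfolding P_def partition_on_insert[OF d]
      using r' BA Bne by simp
    have "B \<notin> Q - {Xa}"
    proof
      assume "B \<in> Q - {Xa}"
      hence "B \<subseteq> \<Union>(Q - {Xa})" by blast
      thus False using d Bne unfolding disjnt_def by blast
    qed
    hence "card P = Suc (card (Q - {Xa}))" using fQ unfolding P_def by simp
    also have "\<dots> = Suc k" using cQ Xa fQ by (simp add: card_Diff_singleton)
    finally have cP: "card P = Suc k" .
    have "insert a B = Xa" using Xa unfolding B_def by blast
    moreover have "P - {B} = Q - {Xa}" using \<open>B \<notin> Q - {Xa}\<close> unfolding P_def by blast
    ultimately have "hh a (P, B) = Q" using Xa unfolding hh_def by (simp add: insert_absorb)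
    moreover have "(P, B) \<in> (SIGMA P:{P. partition_on A P \<and> card P = Suc k}. P)"
      using pP cP by (simp add: P_def)
    ultimately show "Q \<in> ?R" by blast
  qed
qed


lemma finite_parts: "finite A \<Longrightarrow> finite {P. partition_on A P \<and> card P = k}"
  by (rule finite_subset[OF _ finitely_many_partition_on]) auto

lemma card_parts: "finite A \<Longrightarrow> card {P. partition_on A P \<and> card P = k} = Stirling (card A) k"
proof (induction A arbitrary: k rule: finite_induct)
  case empty
  then show ?case using card_parts_empty by simp
next
  case (insert a A)
  show ?case
  proof (cases k)
    case 0
    have E: "{P. partition_on (insert a A) P \<and> card P = 0} = {}"
      using card_parts_zero[of "insert a A"] insert.hyps(1) by simp
    have "card (insert a A) = Suc (card A)" using insert.hyps by simp
    then show ?thesis using 0 by (simp only: E card.empty Stirling.simps)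
  next
    case (Suc m)
    let ?L1 = "{Q. partition_on (insert a A) Q \<and> card Q = Suc m \<and> {a} \<in> Q}"
    let ?L2 = "{Q. partition_on (insert a A) Q \<and> card Q = Suc m \<and> {a} \<notin> Q}"
    let ?S = "SIGMA P:{P. partition_on A P \<and> card P = Suc m}. P"
    have split: "{Q. partition_on (insert a A) Q \<and> card Q = k} = ?L1 \<union> ?L2" using Suc by blast
    have fin: "finite (insert a A)" using insert by simp
    have f1: "finite ?L1" by (rule finite_subset[OF _ finite_parts[OF fin, of "Suc m"]]) blast
    have f2: "finite ?L2" by (rule finite_subset[OF _ finite_parts[OF fin, of "Suc m"]]) blast
    have c1: "card ?L1 = Stirling (card A) m"
    proof -
      have "inj_on (insert {a}) {P. partition_on A P \<and> card P = m}"
      proof (rule inj_onI)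
        fix P P' assume "P \<in> {P. partition_on A P \<and> card P = m}" "P' \<in> {P. partition_on A P \<and> card P = m}"
          "insert {a} P = insert {a} P'"
        moreover have "{a} \<notin> P" using blk_sub[of A P "{a}"] insert.hyps(2) calculation(1) by auto
        moreover have "{a} \<notin> P'" using blk_sub[of A P' "{a}"] insert.hyps(2) calculation(2) by auto
        ultimately show "P = P'" by (metis Diff_insert_absorb)
      qed
      hence "card (insert {a} ` {P. partition_on A P \<and> card P = m}) = card {P. partition_on A P \<and> card P = m}"
        by (rule card_image)
      thus ?thesis by (simp only: S1_eq[OF insert.hyps(2,1), of m] insert.IH)
    qed
    have c2: "card ?L2 = Suc m * Stirling (card A) (Suc m)"
    proof -
      have inj: "inj_on (hh a) ?S"
        by (rule inj_on_subset[OF hh_inj[OF insert.hyps(2)]]) blast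
      have fS: "finite {P. partition_on A P \<and> card P = Suc m}" using finite_parts insert.hyps(1) .
      have fe: "\<forall>P\<in>{P. partition_on A P \<and> card P = Suc m}. finite P"
        using finite_elements insert.hyps(1) by blast
      have "card ?L2 = card ?S" unfolding S2_eq[OF insert.hyps(2,1), of m] using inj by (rule card_image)
      also have "\<dots> = (\<Sum>P\<in>{P. partition_on A P \<and> card P = Suc m}. card P)"
        using card_SigmaI[OF fS fe] .
      also have "\<dots> = (\<Sum>P\<in>{P. partition_on A P \<and> card P = Suc m}. Suc m)" by (rule sum.cong) auto
      also have "\<dots> = Suc m * Stirling (card A) (Suc m)" using insert.IH by simp
      finally show ?thesis .
    qed
    have "card {Q. partition_on (insert a A) Q \<and> card Q = k} = card ?L1 + card ?L2"
      unfolding split by (rule card_Un_disjoint[OF f1 f2]) blast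
    then show ?thesis using c1 c2 Suc insert.hyps by simp
  qed
qed


lemma blk_the: "partition_on A P \<Longrightarrow> B \<in> P \<Longrightarrow> i \<in> B \<Longrightarrow> (THE B. B \<in> P \<and> i \<in> B) = B"
proof (rule the_equality)
  fix X assume P: "partition_on A P" and B: "B \<in> P" "i \<in> B" and X: "X \<in> P \<and> i \<in> X"
  show "X = B"
  proof (rule ccontr)
    assume "X \<noteq> B"
    hence "X \<inter> B = {}" using P B X unfolding part_iff by blast
    thus False using B X by blast
  qed
qed auto

lemma blk_ex: "partition_on A P \<Longrightarrow> i \<in> A \<Longrightarrow> \<exists>B\<in>P. i \<in> B"
  by (auto dest: partition_onD1)

definition CP :: "nat \<Rightarrow> nat set set \<Rightarrow> (nat \<Rightarrow> nat) set" where
  "CP n P = {c \<in> {1..n} \<rightarrow>\<^sub>E {1::nat, 2}. \<forall>B\<in>P. \<forall>i\<in>B. \<forall>j\<in>B. c i = c j}"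

lemma card_CP:
  assumes P: "partition_on {1..n} P"
  shows "card (CP n P) = 2 ^ card P"
proof -
  define f where "f = (\<lambda>g::nat set \<Rightarrow> nat. \<lambda>i. if i \<in> {1..n} then g (THE B. B \<in> P \<and> i \<in> B) else undefined)"
  define f' where "f' = (\<lambda>c::nat \<Rightarrow> nat. restrict (\<lambda>B. c (SOME i. i \<in> B)) P)"
  have fP: "finite P" using finite_elements[OF _ P] by simp
  have Bsub: "B \<subseteq> {1..n}" if "B \<in> P" for B using blk_sub[OF P that] .
  have Bne: "\<exists>i. i \<in> B" if "B \<in> P" for B using blk_ne[OF P that] by blast
  have Sin: "(SOME i. i \<in> B) \<in> B" if "B \<in> P" for B using Bne[OF that] by (rule someI_ex)
  have theP: "(THE B. B \<in> P \<and> i \<in> B) \<in> P \<and> i \<in> (THE B. B \<in> P \<and> i \<in> B)" if iN: "i \<in> {1..n}" for i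
  proof -
    obtain B where "B \<in> P" "i \<in> B" using blk_ex[OF P iN] by blast
    thus ?thesis using blk_the[OF P] by simp
  qed
  have "bij_betw f (P \<rightarrow>\<^sub>E {1,2}) (CP n P)"
  proof (rule bij_betw_byWitness[where f'=f'])
    show "\<forall>g\<in>P \<rightarrow>\<^sub>E {1,2}. f' (f g) = g"
    proof
      fix g :: "nat set \<Rightarrow> nat" assume g: "g \<in> P \<rightarrow>\<^sub>E {1,2}"
      show "f' (f g) = g"
      proof
        fix B show "f' (f g) B = g B"
        proof (cases "B \<in> P")
          case True
          have iN: "(SOME i. i \<in> B) \<in> {1..n}" using Sin[OF True] Bsub[OF True] by blast
          have th: "(THE X. X \<in> P \<and> (SOME i. i \<in> B) \<in> X) = B" using blk_the[OF P True Sin[OF True]] .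
          have "f' (f g) B = f g (SOME i. i \<in> B)" unfolding f'_def using True by (rule restrict_apply')
          also have "\<dots> = g B" unfolding f_def by (simp only: if_P[OF iN] th)
          finally show ?thesis .
        next
          case False
          have "f' (f g) B = undefined" unfolding f'_def restrict_def by (simp only: if_not_P[OF False])
          also have "\<dots> = g B" by (rule sym[OF PiE_arb[OF g False]])
          finally show ?thesis .
        qed
      qed
    qed
    show "\<forall>c\<in>CP n P. f (f' c) = c"
    proof
      fix c assume c: "c \<in> CP n P"
      have cc0: "c \<in> {1..n} \<rightarrow>\<^sub>E {1::nat, 2} \<and> (\<forall>B\<in>P. \<forall>i\<in>B. \<forall>j\<in>B. c i = c j)"
        using c unfolding CP_def by (rule CollectD)
      have cc: "c \<in> {1..n} \<rightarrow>\<^sub>E {1::nat, 2}" using cc0 by (rule conjunct1)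
      have cm: "\<And>B i j. B \<in> P \<Longrightarrow> i \<in> B \<Longrightarrow> j \<in> B \<Longrightarrow> c i = c j" using cc0 by blast
      show "f (f' c) = c"
      proof
        fix i show "f (f' c) i = c i"
        proof (cases "i \<in> {1..n}")
          case True
          let ?B = "THE B. B \<in> P \<and> i \<in> B"
          have B: "?B \<in> P" "i \<in> ?B" using theP[OF True] by (rule conjunct1, rule conjunct2)
          have "f (f' c) i = f' c ?B" unfolding f_def by (simp only: if_P[OF True])
          also have "f' c ?B = c (SOME j. j \<in> ?B)" unfolding f'_def using B(1) by (rule restrict_apply')
          also have "c (SOME j. j \<in> ?B) = c i" using cm[OF B(1) Sin[OF B(1)] B(2)] .
          finally show ?thesis .
        next
          case False
          have "f (f' c) i = undefined" unfolding f_def by (simp only: if_not_P[OF False])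
          also have "\<dots> = c i" by (rule sym[OF PiE_arb[OF cc False]])
          finally show ?thesis .
        qed
      qed
    qed
    show "f ` (P \<rightarrow>\<^sub>E {1,2}) \<subseteq> CP n P"
    proof
      fix c assume "c \<in> f ` (P \<rightarrow>\<^sub>E {1,2})"
      then obtain g where g: "g \<in> P \<rightarrow>\<^sub>E {1,2}" and c: "c = f g" by blast
      have "c \<in> {1..n} \<rightarrow>\<^sub>E {1::nat, 2}"
      proof
        fix i assume i: "i \<in> {1..n}"
        have "g (THE B. B \<in> P \<and> i \<in> B) \<in> {1,2}" using g theP[OF i] by blast
        thus "c i \<in> {1,2}" using i c unfolding f_def by simp
      next
        fix i assume iN: "i \<notin> {1..n}" show "c i = undefined" unfolding c f_def by (simp only: if_not_P[OF iN])
      qed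
      moreover have "\<forall>B\<in>P. \<forall>i\<in>B. \<forall>j\<in>B. c i = c j"
      proof (intro ballI)
        fix B i j assume "B \<in> P" "i \<in> B" "j \<in> B"
        hence h: "i \<in> {1..n}" "j \<in> {1..n}" "(THE B. B \<in> P \<and> i \<in> B) = B" "(THE B. B \<in> P \<and> j \<in> B) = B"
          using Bsub[of B] blk_the[OF P, of B] by blast+
        show "c i = c j" unfolding c f_def by (simp only: if_P[OF h(1)] if_P[OF h(2)] h(3) h(4))
      qed
      ultimately show "c \<in> CP n P" unfolding CP_def by blast
    qed
    show "f' ` CP n P \<subseteq> P \<rightarrow>\<^sub>E {1,2}"
    proof
      fix g assume "g \<in> f' ` CP n P"
      then obtain c where c: "c \<in> CP n P" and g: "g = f' c" by blast
      show "g \<in> P \<rightarrow>\<^sub>E {1,2}"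
      proof
        fix B assume B: "B \<in> P"
        have "(SOME i. i \<in> B) \<in> {1..n}" using Sin[OF B] Bsub[OF B] by blast
        have cc: "c \<in> {1..n} \<rightarrow>\<^sub>E {1::nat, 2}" using c unfolding CP_def by blast
        hence "c (SOME i. i \<in> B) \<in> {1,2}" using \<open>(SOME i. i \<in> B) \<in> {1..n}\<close> by (rule PiE_mem)
        moreover have "g B = c (SOME i. i \<in> B)" unfolding g f'_def using B by (rule restrict_apply')
        ultimately show "g B \<in> {1,2}" by simp
      next
        fix B assume nB: "B \<notin> P" show "g B = undefined" unfolding g f'_def restrict_def by (simp only: if_not_P[OF nB])
      qed
    qed
  qed
  hence "card (CP n P) = card (P \<rightarrow>\<^sub>E ({1,2}::nat set))" by (simp add: bij_betw_same_card)
  also have "\<dots> = 2 ^ card P" using card_PiE[OF fP, of "\<lambda>_. {1::nat,2}"] by (simp add: numeral_2_eq_2)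
  finally show ?thesis .
qed


lemma avoid_iff:
  assumes P: "partition_on {1..n} P" and c: "c \<in> {1..n} \<rightarrow>\<^sub>E {1::nat,2}"
  shows "(\<not> contains_11_12 (P,c) \<and> \<not> contains_12_11 (P,c)) \<longleftrightarrow> (\<forall>B\<in>P. \<forall>i\<in>B. \<forall>j\<in>B. c i = c j)"
proof
  assume H: "\<not> contains_11_12 (P,c) \<and> \<not> contains_12_11 (P,c)"
  note H' = H[unfolded contains_11_12_def contains_12_11_def fst_conv snd_conv]
  have H1: "\<not> (\<exists>B\<in>P. \<exists>i\<in>B. \<exists>j\<in>B. i < j \<and> c i = 1 \<and> c j = 2)" using H' by (rule conjunct1)
  have H2: "\<not> (\<exists>B\<in>P. \<exists>i\<in>B. \<exists>j\<in>B. i < j \<and> c i = 2 \<and> c j = 1)" using H' by (rule conjunct2)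
  show "\<forall>B\<in>P. \<forall>i\<in>B. \<forall>j\<in>B. c i = c j"
  proof (intro ballI)
    fix B i j assume B: "B \<in> P" and i: "i \<in> B" and j: "j \<in> B"
    have "i \<in> {1..n}" "j \<in> {1..n}" using blk_sub[OF P B] i j by blast+
    hence ci: "c i \<in> {1,2}" and cj: "c j \<in> {1,2}" using c by (blast intro: PiE_mem)+
    show "c i = c j"
    proof (rule ccontr)
      assume ne: "c i \<noteq> c j"
      hence ij: "i < j \<or> j < i" by (metis linorder_neqE_nat)
      have cs: "(c i = 1 \<and> c j = 2) \<or> (c i = 2 \<and> c j = 1)" using ci cj ne by auto
      from ij cs show False
        using H1 H2 B i j by blast
    qed
  qed
next
  assume R: "\<forall>B\<in>P. \<forall>i\<in>B. \<forall>j\<in>B. c i = c j"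
  have "\<not> (\<exists>B\<in>P. \<exists>i\<in>B. \<exists>j\<in>B. i < j \<and> c i = 1 \<and> c j = 2)" using R by fastforce
  moreover have "\<not> (\<exists>B\<in>P. \<exists>i\<in>B. \<exists>j\<in>B. i < j \<and> c i = 2 \<and> c j = 1)" using R by fastforce
  ultimately show "\<not> contains_11_12 (P,c) \<and> \<not> contains_12_11 (P,c)"
    unfolding contains_11_12_def contains_12_11_def by (simp only: fst_conv snd_conv simp_thms)
qed

lemma card_le:
  assumes P: "partition_on {1..n} P"
  shows "card P \<le> n"
proof -
  have fP: "finite P" using finite_elements[OF _ P] by simp
  have fe: "\<And>p. p \<in> P \<Longrightarrow> finite p" using blk_sub[OF P] finite_subset by blast
  have "card P = (\<Sum>p\<in>P. 1)" by simp
  also have "\<dots> \<le> (\<Sum>p\<in>P. card p)"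
  proof (rule sum_mono)
    fix p assume p: "p \<in> P"
    show "1 \<le> card p" using fe[OF p] blk_ne[OF P p] by (simp add: Suc_le_eq card_gt_0_iff)
  qed
  also have "\<dots> = card {1..n}" using product_partition[OF P fe] by simp
  finally show ?thesis by simp
qed


theorem mainTheorem9:
  fixes n :: nat
  assumes "n \<ge> 1"
  shows "card {\<sigma> \<in> colored_partitions n. \<not> contains_11_12 \<sigma> \<and> \<not> contains_12_11 \<sigma>}
         = (\<Sum>k=0..n. 2 ^ k * Stirling n k)"
proof -
  let ?Parts = "{P. partition_on {1..n} P}"
  have S_eq: "{\<sigma> \<in> colored_partitions n. \<not> contains_11_12 \<sigma> \<and> \<not> contains_12_11 \<sigma>} = Sigma ?Parts (CP n)"
  proof (rule set_eqI)
    fix \<sigma> :: "nat set set \<times> (nat \<Rightarrow> nat)"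
    obtain P c where sc: "\<sigma> = (P, c)" by (cases \<sigma>)
    show "\<sigma> \<in> {\<sigma> \<in> colored_partitions n. \<not> contains_11_12 \<sigma> \<and> \<not> contains_12_11 \<sigma>} \<longleftrightarrow> \<sigma> \<in> Sigma ?Parts (CP n)"
    proof
      assume "\<sigma> \<in> {\<sigma> \<in> colored_partitions n. \<not> contains_11_12 \<sigma> \<and> \<not> contains_12_11 \<sigma>}"
      hence h: "partition_on {1..n} P" "c \<in> {1..n} \<rightarrow>\<^sub>E {1::nat, 2}" "\<not> contains_11_12 (P,c) \<and> \<not> contains_12_11 (P,c)"
        unfolding sc colored_partitions_def by blast+
      have "\<forall>B\<in>P. \<forall>i\<in>B. \<forall>j\<in>B. c i = c j" using avoid_iff[OF h(1,2)] h(3) by blast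
      hence "c \<in> CP n P" using h(2) unfolding CP_def by blast
      thus "\<sigma> \<in> Sigma ?Parts (CP n)" using h(1) sc by blast
    next
      assume "\<sigma> \<in> Sigma ?Parts (CP n)"
      hence h: "partition_on {1..n} P" "c \<in> CP n P" using sc by blast+
      have h2: "c \<in> {1..n} \<rightarrow>\<^sub>E {1::nat, 2}" "\<forall>B\<in>P. \<forall>i\<in>B. \<forall>j\<in>B. c i = c j"
        using h(2) unfolding CP_def by blast+
      have "\<not> contains_11_12 (P,c) \<and> \<not> contains_12_11 (P,c)" using avoid_iff[OF h(1) h2(1)] h2(2) by blast
      moreover have "(P, c) \<in> colored_partitions n" using h(1) h2(1) unfolding colored_partitions_def by blast
      ultimately show "\<sigma> \<in> {\<sigma> \<in> colored_partitions n. \<not> contains_11_12 \<sigma> \<and> \<not> contains_12_11 \<sigma>}"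
        using sc by blast
    qed
  qed
  have fParts: "finite ?Parts" by (rule finitely_many_partition_on) simp
  have fCP: "\<forall>P\<in>?Parts. finite (CP n P)"
  proof
    fix P show "finite (CP n P)"
      by (rule finite_subset[of _ "{1..n} \<rightarrow>\<^sub>E {1::nat, 2}"]) (auto simp: CP_def intro: finite_PiE)
  qed
  have "card (Sigma ?Parts (CP n)) = (\<Sum>P\<in>?Parts. card (CP n P))" by (rule card_SigmaI[OF fParts fCP])
  also have "\<dots> = (\<Sum>P\<in>?Parts. 2 ^ card P)" by (rule sum.cong) (auto simp: card_CP)
  also have "\<dots> = (\<Sum>k\<in>{0..n}. \<Sum>P\<in>{x. x \<in> ?Parts \<and> card x = k}. 2 ^ card P)"
    by (rule sum.group[symmetric, OF fParts]) (auto simp: card_le)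
  also have "\<dots> = (\<Sum>k\<in>{0..n}. 2 ^ k * Stirling n k)"
  proof (rule sum.cong[OF refl])
    fix k assume "k \<in> {0..n}"
    have "(\<Sum>P\<in>{x. x \<in> ?Parts \<and> card x = k}. 2 ^ card P) = (\<Sum>P\<in>{x. partition_on {1..n} x \<and> card x = k}. (2::nat) ^ k)"
      by (rule sum.cong) auto
    also have "\<dots> = 2 ^ k * card {x. partition_on {1..n} x \<and> card x = k}" by simp
    also have "\<dots> = 2 ^ k * Stirling n k" using card_parts[of "{1..n}" k] by simp
    finally show "(\<Sum>P\<in>{x. x \<in> ?Parts \<and> card x = k}. 2 ^ card P) = 2 ^ k * Stirling n k" .
  qed
  finally show ?thesis unfolding S_eq .
qed

end
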